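(* Let $G$ be the final graph of the uncoordinated construction (described in the context) on a finite point set $P\subset\mathbb{R}^d$ with parameter $s>1$. Let $\mathcal{W}$ be the collection consisting of, for each edge $pq$ of $G$, the pair $(B_r(p),B_r(q))$ with $r=|pq|/(2s+2)$. Then $\mathcal{W}$ is an $s$-well-separated pair decomposition of $P$, and its size equals the number of edges of $G$.
   Context: Fix $d\ge 1$. Let $P\subset\mathbb{R}^d$ be a finite set of $n\ge 2$ points, $|xy|$ the Euclidean distance, $s>1$. For $p\in P$ and $r\ge0$, $B_r(p)=\{x\in P: |px|\le r\}$. Uncoordinated construction: start with the graph $G$ on vertex set $P$ with no edges. Every ordered pair $(p,q)$ of distinct points of $P$ is processed exactly once, in an arbitrary order, one at a time. When $(p,q)$ is processed, the edge $pq$ is added to $G$ unless $G$ currently contains an edge whose endpoints can be labeled $p',q'$ with $|pp'|\le |p'q'|/(2s+2)$ and $|qq'|\le |p'q'|/(2s+2)$. $G$ is the graph after all pairs are processed. For $A,B\subseteq P$: $\mathrm{diam}(A)=\max_{x,y\in A}|xy|$, $d(A,B)=\min_{x\in A,y\in B}|xy|$; $(A,B)$ is $s$-separated if $d(A,B)\ge s\cdot\max(\mathrm{diam}(A),\mathrm{diam}(B))$. An $s$-well-separated pair decomposition ($s$-WSPD) of $P$ is a collection of pairs $\{(A_i,B_i)\}_{i=1}^m$ with $A_i,B_i\subseteq P$, each pair $s$-separated, such that for any two points $p,q\in P$ there is some $i$ with $p\in A_i$ and $q\in B_i$; $m$ is its size. *)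

theory Defs
  imports "HOL-Analysis.Analysis"
begin

definition ballP :: "'a::metric_space set \<Rightarrow> 'a \<Rightarrow> real \<Rightarrow> 'a set" where
  "ballP P p r = {x \<in> P. dist p x \<le> r}"

definition blocked :: "real \<Rightarrow> 'a::metric_space set set \<Rightarrow> 'a \<Rightarrow> 'a \<Rightarrow> bool" where
  "blocked s E p q \<longleftrightarrow> (\<exists>p' q'. {p', q'} \<in> E \<and>
      dist p p' \<le> dist p' q' / (2 * s + 2) \<and> dist q q' \<le> dist p' q' / (2 * s + 2))"

definition step :: "real \<Rightarrow> 'a::metric_space set set \<Rightarrow> 'a \<times> 'a \<Rightarrow> 'a set set" where
  "step s E pq = (if blocked s E (fst pq) (snd pq) then E else insert {fst pq, snd pq} E)"

definition uncoord_graph :: "real \<Rightarrow> ('a::metric_space \<times> 'a) list \<Rightarrow> 'a set set" where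
  "uncoord_graph s L = fold (\<lambda>pq E. step s E pq) L {}"

text \<open>s-separated pair, using library diameter and setdist (for finite nonempty sets these
  are max and min of distances).\<close>
definition s_separated :: "real \<Rightarrow> 'a::metric_space set \<Rightarrow> 'a set \<Rightarrow> bool" where
  "s_separated s A B \<longleftrightarrow> setdist A B \<ge> s * max (diameter A) (diameter B)"

definition is_wspd :: "real \<Rightarrow> 'a::metric_space set \<Rightarrow> 'a set set set \<Rightarrow> bool" where
  "is_wspd s P W \<longleftrightarrow> finite W \<and>
     (\<forall>w\<in>W. \<exists>A B. w = {A, B} \<and> A \<subseteq> P \<and> B \<subseteq> P \<and> s_separated s A B) \<and>
     (\<forall>p\<in>P. \<forall>q\<in>P. p \<noteq> q \<longrightarrow> (\<exists>w\<in>W. \<exists>A B. w = {A, B} \<and> p \<in> A \<and> q \<in> B))"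

end

theory Submission
  imports Defs
begin

definition FF :: "'a::metric_space set \<Rightarrow> real \<Rightarrow> 'a \<Rightarrow> 'a \<Rightarrow> 'a set set" where
  "FF P s a b = {ballP P a (dist a b / (2 * s + 2)), ballP P b (dist a b / (2 * s + 2))}"

lemma FF_sym: "FF P s a b = FF P s b a"
  unfolding FF_def by (auto simp: dist_commute)

lemma step_mono: "E \<subseteq> step s E x"
  unfolding step_def by auto

lemma fold_mono: "E \<subseteq> fold (\<lambda>pq E. step s E pq) L E"
proof (induction L arbitrary: E)
  case Nil then show ?case by simp
next
  case (Cons x L)
  then show ?case using step_mono[of E s x] by (simp, blast)
qed

lemma blocked_mono: "blocked s E p q \<Longrightarrow> E \<subseteq> E' \<Longrightarrow> blocked s E' p q"
  unfolding blocked_def by blast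

lemma fold_blocked:
  assumes "s > 1" "x \<in> set L"
  shows "blocked s (fold (\<lambda>pq E. step s E pq) L E) (fst x) (snd x)"
  using assms(2)
proof (induction L arbitrary: E)
  case Nil then show ?case by simp
next
  case (Cons y L)
  show ?case
  proof (cases "x \<in> set L")
    case True then show ?thesis using Cons by simp
  next
    case False
    then have xy: "x = y" using Cons by simp
    have "blocked s (step s E y) (fst x) (snd x)"
    proof (cases "blocked s E (fst y) (snd y)")
      case True then show ?thesis using xy by (simp add: step_def)
    next
      case False
      have "dist (fst x) (snd x) / (2 * s + 2) \<ge> 0" using assms(1) by simp
      then show ?thesis using False xy unfolding step_def blocked_def
        by (intro exI[of _ "fst x"] exI[of _ "snd x"]) auto
    qed
    then show ?thesis using blocked_mono fold_mono by (simp, blast)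
  qed
qed

lemma fold_edges:
  "e \<in> fold (\<lambda>pq E. step s E pq) L E \<Longrightarrow> e \<in> E \<or> (\<exists>a b. (a, b) \<in> set L \<and> e = {a, b})"
proof (induction L arbitrary: E)
  case Nil then show ?case by simp
next
  case (Cons y L)
  from Cons.IH[OF Cons.prems[simplified]] show ?case
    by (cases y) (auto simp: step_def split: if_splits)
qed

lemma block_lemma:
  assumes "p \<in> P" "q \<in> P" "{c, d} \<in> E" "FF P s p q = FF P s c d" "s > 1"
  shows "blocked s E p q"
proof -
  have k: "2 * s + 2 > 0" using assms(5) by simp
  have pin: "p \<in> ballP P p (dist p q / (2 * s + 2))" using assms(1) k by (simp add: ballP_def)
  have qin: "q \<in> ballP P q (dist p q / (2 * s + 2))" using assms(2) k by (simp add: ballP_def)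
  from assms(4) have
    "(ballP P p (dist p q / (2 * s + 2)) = ballP P c (dist c d / (2 * s + 2)) \<and>
      ballP P q (dist p q / (2 * s + 2)) = ballP P d (dist c d / (2 * s + 2))) \<or>
     (ballP P p (dist p q / (2 * s + 2)) = ballP P d (dist c d / (2 * s + 2)) \<and>
      ballP P q (dist p q / (2 * s + 2)) = ballP P c (dist c d / (2 * s + 2)))"
    unfolding FF_def by (auto simp: doubleton_eq_iff)
  then show ?thesis
  proof
    assume h: "ballP P p (dist p q / (2 * s + 2)) = ballP P c (dist c d / (2 * s + 2)) \<and>
      ballP P q (dist p q / (2 * s + 2)) = ballP P d (dist c d / (2 * s + 2))"
    have "dist c p \<le> dist c d / (2 * s + 2)" "dist d q \<le> dist c d / (2 * s + 2)"
      using pin qin h by (auto simp: ballP_def)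
    then show ?thesis unfolding blocked_def using assms(3)
      by (intro exI[of _ c] exI[of _ d]) (auto simp: dist_commute)
  next
    assume h: "ballP P p (dist p q / (2 * s + 2)) = ballP P d (dist c d / (2 * s + 2)) \<and>
      ballP P q (dist p q / (2 * s + 2)) = ballP P c (dist c d / (2 * s + 2))"
    have "dist d p \<le> dist c d / (2 * s + 2)" "dist c q \<le> dist c d / (2 * s + 2)"
      using pin qin h by (auto simp: ballP_def)
    moreover have "{d, c} \<in> E" using assms(3) by (simp add: insert_commute)
    ultimately show ?thesis unfolding blocked_def
      by (intro exI[of _ d] exI[of _ c]) (auto simp: dist_commute)
  qed
qed

definition Inj :: "'a::metric_space set \<Rightarrow> real \<Rightarrow> 'a set set \<Rightarrow> bool" where
  "Inj P s E \<longleftrightarrow> (\<forall>a b c d. {a, b} \<in> E \<longrightarrow> {c, d} \<in> E \<longrightarrow> a \<in> P \<longrightarrow> b \<in> P \<longrightarrow>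
      c \<in> P \<longrightarrow> d \<in> P \<longrightarrow> FF P s a b = FF P s c d \<longrightarrow> {a, b} = {c, d})"

lemma Inj_step:
  assumes "Inj P s E" "s > 1"
  shows "Inj P s (step s E x)"
proof (cases "blocked s E (fst x) (snd x)")
  case True then show ?thesis using assms by (simp add: step_def)
next
  case False
  obtain p q where x: "x = (p, q)" by (cases x)
  have nb: "\<not> blocked s E p q" using False x by simp
  have key: False if "{a, b} = {p, q}" "{c, d} \<in> E" "a \<in> P" "b \<in> P"
      "FF P s a b = FF P s c d" for a b c d
  proof -
    have "p \<in> P" "q \<in> P" using that by (auto simp: doubleton_eq_iff)
    moreover have "FF P s p q = FF P s a b" using that(1)
      by (metis doubleton_eq_iff FF_sym)
    ultimately show False using block_lemma[of p P q c d E s] that nb assms(2) by simp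
  qed
  have st: "step s E x = insert {p, q} E" using False x by (simp add: step_def)
  show ?thesis unfolding Inj_def st
  proof (intro allI impI)
    fix a b c d
    assume h: "{a, b} \<in> insert {p, q} E" "{c, d} \<in> insert {p, q} E"
      "a \<in> P" "b \<in> P" "c \<in> P" "d \<in> P" "FF P s a b = FF P s c d"
    show "{a, b} = {c, d}"
    proof (cases "{a, b} = {p, q}")
      case True
      then show ?thesis using h key[of a b c d] by auto
    next
      case F1: False
      show ?thesis
      proof (cases "{c, d} = {p, q}")
        case True then show ?thesis using h key[of c d a b] by auto
      next
        case False
        then have "{a, b} \<in> E" "{c, d} \<in> E" using F1 h by auto
        then show ?thesis using h assms(1) unfolding Inj_def by simp
      qed
    qed
  qed
qed

lemma Inj_fold: "Inj P s E \<Longrightarrow> s > 1 \<Longrightarrow> Inj P s (fold (\<lambda>pq E. step s E pq) L E)"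
proof (induction L arbitrary: E)
  case Nil then show ?case by simp
next
  case (Cons y L) then show ?case using Inj_step[of P s E y] by simp
qed

lemma sep:
  fixes p q :: "'a::euclidean_space"
  assumes "p \<in> P" "q \<in> P" "s > 1"
  shows "s_separated s (ballP P p (dist p q / (2 * s + 2))) (ballP P q (dist p q / (2 * s + 2)))"
proof -
  define r where "r = dist p q / (2 * s + 2)"
  have k: "2 * s + 2 > 0" using assms(3) by simp
  have r0: "r \<ge> 0" unfolding r_def using k by simp
  have dr: "dist p q = (2 * s + 2) * r" unfolding r_def using k by simp
  have diam: "diameter (ballP P x r) \<le> 2 * r" for x
  proof (rule diameter_le)
    show "ballP P x r \<noteq> {} \<or> 0 \<le> 2 * r" using r0 by simp
    fix y z assume "y \<in> ballP P x r" "z \<in> ballP P x r"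
    then have "dist x y \<le> r" "dist x z \<le> r" by (auto simp: ballP_def)
    then have "dist y z \<le> 2 * r" using dist_triangle[of y z x] by (simp add: dist_commute)
    then show "norm (y - z) \<le> 2 * r" by (simp add: dist_norm)
  qed
  have sd: "2 * s * r \<le> setdist (ballP P p r) (ballP P q r)"
    unfolding le_setdist_iff
  proof (intro conjI ballI impI)
    fix x y assume "x \<in> ballP P p r" "y \<in> ballP P q r"
    then have "dist p x \<le> r" "dist q y \<le> r" by (auto simp: ballP_def)
    moreover have "dist p q \<le> dist p x + dist x y + dist y q"
      using dist_triangle[of p q x] dist_triangle[of x q y] by simp
    ultimately show "2 * s * r \<le> dist x y" using dr by (simp add: dist_commute algebra_simps)
  next
    assume "ballP P p r = {} \<or> ballP P q r = {}"
    then show "2 * s * r \<le> 0" using assms r0 by (auto simp: ballP_def)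
  qed
  have "s * max (diameter (ballP P p r)) (diameter (ballP P q r)) \<le> s * (2 * r)"
    using diam[of p] diam[of q] assms(3) by (intro mult_left_mono) auto
  then show ?thesis using sd unfolding s_separated_def r_def[symmetric] by simp
qed

theorem theorem4:
  fixes P :: "'a::euclidean_space set" and s :: real and L :: "('a \<times> 'a) list"
  assumes "finite P" and "card P \<ge> 2" and "s > 1"
    and "distinct L" and "set L = {(p, q). p \<in> P \<and> q \<in> P \<and> p \<noteq> q}"
  shows "is_wspd s P {{ballP P p (dist p q / (2 * s + 2)), ballP P q (dist p q / (2 * s + 2))} | p q.
                       {p, q} \<in> uncoord_graph s L}
       \<and> card {{ballP P p (dist p q / (2 * s + 2)), ballP P q (dist p q / (2 * s + 2))} | p q.
                       {p, q} \<in> uncoord_graph s L} = card (uncoord_graph s L)"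
proof -
  define G where "G = uncoord_graph s L"
  define W where "W = {{ballP P p (dist p q / (2 * s + 2)), ballP P q (dist p q / (2 * s + 2))} | p q.
                       {p, q} \<in> G}"
  have WF: "W = {FF P s p q | p q. {p, q} \<in> G}" unfolding W_def FF_def by simp
  have edges: "\<exists>a b. a \<in> P \<and> b \<in> P \<and> e = {a, b}" if "e \<in> G" for e
  proof -
    have "e \<in> {} \<or> (\<exists>a b. (a, b) \<in> set L \<and> e = {a, b})"
      using fold_edges[of e s L "{}"] that unfolding G_def uncoord_graph_def by simp
    then obtain a b where "(a, b) \<in> set L" "e = {a, b}" by blast
    then show ?thesis using assms(5) by auto
  qed
  have edge2: "\<And>a b. {a, b} \<in> G \<Longrightarrow> a \<in> P \<and> b \<in> P"
  proof -
    fix a b assume "{a, b} \<in> G"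
    then obtain c d where "c \<in> P" "d \<in> P" "{a, b} = {c, d}" using edges by blast
    then show "a \<in> P \<and> b \<in> P" by (auto simp: doubleton_eq_iff)
  qed
  have inj: "Inj P s G" unfolding G_def uncoord_graph_def
    by (rule Inj_fold) (auto simp: Inj_def assms(3))
  define h where "h e = (SOME w. \<exists>a b. e = {a, b} \<and> w = FF P s a b)" for e
  have hF: "h {a, b} = FF P s a b" for a b
    unfolding h_def
    by (rule someI2[of _ "FF P s a b"]) (blast, metis doubleton_eq_iff FF_sym)
  have Wimg: "W = h ` G"
  proof
    show "W \<subseteq> h ` G" unfolding WF using hF by (auto intro!: image_eqI)
    show "h ` G \<subseteq> W"
    proof
      fix w assume "w \<in> h ` G"
      then obtain e where e: "e \<in> G" "w = h e" by blast
      then obtain a b where "e = {a, b}" using edges by blast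
      then show "w \<in> W" unfolding WF using e hF by blast
    qed
  qed
  have injh: "inj_on h G"
  proof (rule inj_onI)
    fix e1 e2 assume "e1 \<in> G" "e2 \<in> G" "h e1 = h e2"
    moreover obtain a b c d where "e1 = {a, b}" "e2 = {c, d}" "a \<in> P" "b \<in> P" "c \<in> P" "d \<in> P"
      using edges \<open>e1 \<in> G\<close> \<open>e2 \<in> G\<close> by meson
    ultimately show "e1 = e2" using inj hF unfolding Inj_def by simp
  qed
  have finG: "finite G"
  proof -
    have "G \<subseteq> (\<lambda>(a, b). {a, b}) ` (P \<times> P)"
    proof
      fix e assume "e \<in> G"
      then obtain a b where "a \<in> P" "b \<in> P" "e = {a, b}" using edges by blast
      then show "e \<in> (\<lambda>(a, b). {a, b}) ` (P \<times> P)" by (intro image_eqI[of _ _ "(a, b)"]) auto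
    qed
    then show ?thesis using assms(1) finite_subset by blast
  qed
  have card: "card W = card G" unfolding Wimg by (rule card_image[OF injh])
  have sepW: "\<forall>w\<in>W. \<exists>A B. w = {A, B} \<and> A \<subseteq> P \<and> B \<subseteq> P \<and> s_separated s A B"
  proof
    fix w assume "w \<in> W"
    then obtain p q where pq: "w = {ballP P p (dist p q / (2 * s + 2)), ballP P q (dist p q / (2 * s + 2))}"
      "{p, q} \<in> G" unfolding W_def by blast
    then have "p \<in> P" "q \<in> P" using edge2 by auto
    then have "s_separated s (ballP P p (dist p q / (2 * s + 2))) (ballP P q (dist p q / (2 * s + 2)))"
      using sep assms(3) by blast
    moreover have "ballP P x r \<subseteq> P" for x r by (auto simp: ballP_def)
    ultimately show "\<exists>A B. w = {A, B} \<and> A \<subseteq> P \<and> B \<subseteq> P \<and> s_separated s A B"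
      using pq(1) by blast
  qed
  have cover: "\<forall>p\<in>P. \<forall>q\<in>P. p \<noteq> q \<longrightarrow> (\<exists>w\<in>W. \<exists>A B. w = {A, B} \<and> p \<in> A \<and> q \<in> B)"
  proof (intro ballI impI)
    fix p q assume pq: "p \<in> P" "q \<in> P" "p \<noteq> q"
    then have "(p, q) \<in> set L" using assms(5) by simp
    from fold_blocked[OF assms(3) this, of "{}"]
    have "blocked s G p q" unfolding G_def uncoord_graph_def by simp
    then obtain a b where ab: "{a, b} \<in> G" "dist p a \<le> dist a b / (2 * s + 2)"
      "dist q b \<le> dist a b / (2 * s + 2)" unfolding blocked_def by blast
    have "p \<in> ballP P a (dist a b / (2 * s + 2))" "q \<in> ballP P b (dist a b / (2 * s + 2))"
      using ab pq by (auto simp: ballP_def dist_commute)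
    moreover have "{ballP P a (dist a b / (2 * s + 2)), ballP P b (dist a b / (2 * s + 2))} \<in> W"
      unfolding W_def using ab(1) by blast
    ultimately show "\<exists>w\<in>W. \<exists>A B. w = {A, B} \<and> p \<in> A \<and> q \<in> B" by blast
  qed
  have "is_wspd s P W" unfolding is_wspd_def using sepW cover finG Wimg by simp
  then show ?thesis using card unfolding W_def G_def by simp
qed

end
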